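(* Let $(X,\|\cdot\|)$ be a Banach space, $A,B\subset X$ nonempty, and suppose $A$ is a uniformly convex set. Then the ordered pair $(A,B)$ has the $UC$ property.
   Context: The metric is $\rho(x,y)=\|x-y\|$; $\mathrm{dist}(A,B)=\inf\{\|a-b\|:a\in A,b\in B\}$; $B(x_0,r)=\{x\in X:\|x-x_0\|<r\}$. A set $A\subset X$ is a uniformly convex set if for every $\varepsilon>0$ there exists $\eta(\varepsilon)>0$ such that for all $x,y\in A$ with $\|x-y\|\ge\varepsilon$ one has $B\left(\frac{x+y}{2},\eta(\varepsilon)\right)\subset A$. The ordered pair $(A,B)$ has the $UC$ property if for all sequences $\{x_n\},\{z_n\}\subset A$, $\{y_n\}\subset B$ with $\lim_n\|x_n-y_n\|=\lim_n\|z_n-y_n\|=\mathrm{dist}(A,B)$ one has $\lim_n\|x_n-z_n\|=0$. *)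

theory Defs
  imports "HOL-Analysis.Analysis"
begin

definition uniformly_convex_set :: "'a::real_normed_vector set \<Rightarrow> bool" where
  "uniformly_convex_set A \<longleftrightarrow>
     (\<forall>\<epsilon>>0. \<exists>\<eta>>0. \<forall>x\<in>A. \<forall>y\<in>A. norm (x - y) \<ge> \<epsilon> \<longrightarrow>
        ball ((1/2) *\<^sub>R (x + y)) \<eta> \<subseteq> A)"

text \<open>The UC property of the ordered pair (A,B); dist(A,B) is the library setdist
  (the infimum of distances, for nonempty sets).\<close>
definition UC_property :: "'a::real_normed_vector set \<Rightarrow> 'a set \<Rightarrow> bool" where
  "UC_property A B \<longleftrightarrow>
     (\<forall>x z y. (\<forall>n. x n \<in> A) \<longrightarrow> (\<forall>n. z n \<in> A) \<longrightarrow> (\<forall>n. y n \<in> B) \<longrightarrow>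
        (\<lambda>n. norm (x n - y n)) \<longlonglongrightarrow> setdist A B \<longrightarrow>
        (\<lambda>n. norm (z n - y n)) \<longlonglongrightarrow> setdist A B \<longrightarrow>
        (\<lambda>n. norm (x n - z n)) \<longlonglongrightarrow> 0)"

end

theory Submission
  imports Defs
begin

lemma key:
  fixes m y :: "'a::real_normed_vector"
  assumes "ball m e \<subseteq> A" "y \<in> B" "e > 0" "norm (m - y) < setdist A B + e/2"
    "setdist A B > 0"
  shows False
proof -
  define r where "r = norm (m - y)"
  show False
  proof (cases "r < e")
    case True
    then have "y \<in> A" using assms(1) by (auto simp: r_def dist_norm norm_minus_commute)
    then have "setdist A B \<le> dist y y" using assms(2) setdist_le_dist by blast
    then show False using assms(5) by simp
  next
    case False
    then have r0: "r > 0" using assms(3) by linarith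
    define w where "w = m + ((e/2)/r) *\<^sub>R (y - m)"
    have "dist m w = e/2" using r0 assms(3)
      by (simp add: w_def dist_norm r_def norm_minus_commute)
    then have "w \<in> A" using assms(1,3) by auto
    have "w - y = (1 - (e/2)/r) *\<^sub>R (m - y)"
      by (simp add: w_def algebra_simps)
    moreover have "1 - (e/2)/r \<ge> 0" using False r0 assms(3) by (simp add: field_simps)
    ultimately have "norm (w - y) = (1 - (e/2)/r) * r" by (simp add: r_def)
    also have "\<dots> = r - e/2" using r0 by (simp add: field_simps)
    finally have "dist w y < setdist A B" using assms(4) by (simp add: dist_norm r_def)
    moreover have "setdist A B \<le> dist w y" using \<open>w \<in> A\<close> assms(2) setdist_le_dist by blast
    ultimately show False by simp
  qed
qed

lemma mid_bound:
  fixes x z y :: "'a::real_normed_vector"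
  shows "norm ((1/2) *\<^sub>R (x + z) - y) \<le> (norm (x - y) + norm (z - y)) / 2"
proof -
  have "(1/2) *\<^sub>R (x + z) - y = (1/2) *\<^sub>R ((x - y) + (z - y))" by (simp add: algebra_simps flip: scaleR_add_left)
  then have "norm ((1/2) *\<^sub>R (x + z) - y) = (1/2) * norm ((x - y) + (z - y))" by simp
  also have "\<dots> \<le> (1/2) * (norm (x - y) + norm (z - y))"
    using norm_triangle_ineq by (intro mult_left_mono) auto
  finally show ?thesis by simp
qed

theorem theorem37:
  fixes A B :: "'a::banach set"
  assumes "A \<noteq> {}" and "B \<noteq> {}"
    and "uniformly_convex_set A"
  shows "UC_property A B"
  unfolding UC_property_def
proof (intro allI impI)
  fix x z y :: "nat \<Rightarrow> 'a"
  assume xA: "\<forall>n. x n \<in> A" and zA: "\<forall>n. z n \<in> A" and yB: "\<forall>n. y n \<in> B"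
    and lx: "(\<lambda>n. norm (x n - y n)) \<longlonglongrightarrow> setdist A B"
    and lz: "(\<lambda>n. norm (z n - y n)) \<longlonglongrightarrow> setdist A B"
  define d where "d = setdist A B"
  have d0: "d \<ge> 0" by (simp add: d_def setdist_pos_le)
  show "(\<lambda>n. norm (x n - z n)) \<longlonglongrightarrow> 0"
  proof (cases "d = 0")
    case True
    have s: "(\<lambda>n. norm (x n - y n) + norm (z n - y n)) \<longlonglongrightarrow> 0"
      using tendsto_add[OF lx lz] True by (simp add: d_def)
    have "norm (x n - z n) \<le> norm (x n - y n) + norm (z n - y n)" for n
      using norm_triangle_ineq4[of "x n - y n" "z n - y n"] by simp
    then show ?thesis
      by (intro Lim_null_comparison[OF _ s]) (auto intro: always_eventually)
  next
    case False
    then have dpos: "d > 0" using d0 by simp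
    show ?thesis
    proof (rule tendstoI)
      fix \<epsilon> :: real assume "\<epsilon> > 0"
      then obtain \<eta> where eta: "\<eta> > 0" and H: "\<forall>a\<in>A. \<forall>b\<in>A. norm (a - b) \<ge> \<epsilon> \<longrightarrow>
        ball ((1/2) *\<^sub>R (a + b)) \<eta> \<subseteq> A"
        using assms(3) unfolding uniformly_convex_set_def by blast
      have e1: "eventually (\<lambda>n. norm (x n - y n) < d + \<eta>/2) sequentially"
        using order_tendstoD(2)[OF lx] eta by (simp add: d_def)
      have e2: "eventually (\<lambda>n. norm (z n - y n) < d + \<eta>/2) sequentially"
        using order_tendstoD(2)[OF lz] eta by (simp add: d_def)
      show "eventually (\<lambda>n. dist (norm (x n - z n)) 0 < \<epsilon>) sequentially"
        using e1 e2
      proof eventually_elim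
        case (elim n)
        show ?case
        proof (rule ccontr)
          assume "\<not> dist (norm (x n - z n)) 0 < \<epsilon>"
          then have "norm (x n - z n) \<ge> \<epsilon>" by simp
          then have b: "ball ((1/2) *\<^sub>R (x n + z n)) \<eta> \<subseteq> A" using H xA zA by blast
          have "norm ((1/2) *\<^sub>R (x n + z n) - y n) < setdist A B + \<eta>/2"
            using mid_bound[of "x n" "z n" "y n"] elim by (simp add: d_def)
          then show False using key[OF b yB[rule_format] eta] dpos by (simp add: d_def)
        qed
      qed
    qed
  qed
qed

end
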